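(* Let $\chi\in[0,1]$ and $f_A,f_R,F$ be as in the context. Define $$w_1(\phi,R,r)=\sqrt{R^2(1-\cos\phi)^2+(R+r)^2\sin^2\phi},\quad w_2(\phi,R,r)=\sqrt{R^2\sin^2\phi+(R+r)^2\cos^2\phi},$$ $$w_3(\phi,R,r)=\sqrt{R^2\cos^2\phi+(R+r)^2(1-\sin\phi)^2}.$$ Then necessary conditions for the ellipse state $\delta_{(R,r)}$, $R,r\ge 0$, to be an equilibrium state of the mean-field equation $\partial_t\rho+\nabla\cdot[\rho\,(F(\cdot,T)\ast\rho)]=0$ are $$\int_0^{\pi}(f_A+f_R)\big(w_1(\phi,R,r)\big)\,R\,(1-\cos\phi)\,w_2(\phi,R,r)\,d\phi=0$$ and $$\int_{\pi/2}^{3\pi/2}(\chi f_A+f_R)\big(w_3(\phi,R,r)\big)\,(R+r)\,(1-\sin\phi)\,w_2(\phi,R,r)\,d\phi=0.$$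
   Context: Let $f_R, f_A:[0,\infty)\to\mathbb{R}$ be smooth integrable functions with $f_R\ge 0$ and $f_A\le 0$, such that there is $d_a>0$ with $(f_A+f_R)(\rho)\le 0$ for $\rho>d_a$ and $(f_A+f_R)(\rho)>0$ for $0\le\rho<d_a$. For $\chi\in[0,1]$, $s=(0,1)$, $l=(1,0)$, let $T=\chi\, s\otimes s + l\otimes l$ and $F(d,T) = f_A(|d|)\,T d + f_R(|d|)\,d$ for $d\in\mathbb{R}^2$; assume $F$ is $C^1$ with bounded total derivatives. Assume there is $d_e>d_a$ such that $\chi f_A+f_R$ is strictly decreasing on $[0,d_e]$ for all $\chi\in[0,1]$. A Borel probability measure $\mu$ on $\mathbb{R}^2$ is an equilibrium state if $K(x):=\int_{\mathbb{R}^2}F(x-y,T)\,d\mu(y)$ satisfies $K\in L^1_{loc}(d\mu)$ and $K=0$ on $\mathrm{supp}(\mu)$ $\mu$-a.e. For $R,r\ge0$, the ellipse state $\delta_{(R,r)}$ is the probability measure uniformly distributed on $\{(R\cos\phi,(R+r)\sin\phi):\phi\in[0,2\pi)\}$. *)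

theory Defs
  imports "HOL-Probability.Probability"
begin

definition smooth_on :: "real set \<Rightarrow> (real \<Rightarrow> real) \<Rightarrow> bool" where
  "smooth_on S f \<longleftrightarrow> (\<exists>D. D 0 = f \<and>
      (\<forall>k. \<forall>x\<in>S. (D k has_real_derivative D (Suc k) x) (at x within S)))"

text \<open>Points of R^2 are pairs (first coordinate, second coordinate); l = (1,0), s = (0,1).
  T = chi s\<otimes>s + l\<otimes>l acts by T (d1,d2) = (d1, chi*d2).\<close>
definition Tmat :: "real \<Rightarrow> real \<times> real \<Rightarrow> real \<times> real" where
  "Tmat chi d = (fst d, chi * snd d)"

definition Fforce :: "(real \<Rightarrow> real) \<Rightarrow> (real \<Rightarrow> real) \<Rightarrow> real \<Rightarrow> real \<times> real \<Rightarrow> real \<times> real" where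
  "Fforce fA fR chi d = fA (norm d) *\<^sub>R Tmat chi d + fR (norm d) *\<^sub>R d"

definition Kfield :: "(real \<Rightarrow> real) \<Rightarrow> (real \<Rightarrow> real) \<Rightarrow> real \<Rightarrow> (real \<times> real) measure
     \<Rightarrow> real \<times> real \<Rightarrow> real \<times> real" where
  "Kfield fA fR chi \<mu> x = (\<integral>y. Fforce fA fR chi (x - y) \<partial>\<mu>)"

definition msupport :: "(real \<times> real) measure \<Rightarrow> (real \<times> real) set" where
  "msupport \<mu> = {x. \<forall>e>0. emeasure \<mu> (ball x e) > 0}"

definition equilibrium_state :: "(real \<Rightarrow> real) \<Rightarrow> (real \<Rightarrow> real) \<Rightarrow> real \<Rightarrow> (real \<times> real) measure \<Rightarrow> bool" where
  "equilibrium_state fA fR chi \<mu> \<longleftrightarrow>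
     prob_space \<mu> \<and> sets \<mu> = sets borel \<and>
     (\<forall>C. compact C \<longrightarrow> set_integrable \<mu> C (Kfield fA fR chi \<mu>)) \<and>
     (AE x in \<mu>. x \<in> msupport \<mu> \<longrightarrow> Kfield fA fR chi \<mu> x = 0)"

text \<open>Ellipse parametrisation and its speed (arc-length element).\<close>
definition ell_curve :: "real \<Rightarrow> real \<Rightarrow> real \<Rightarrow> real \<times> real" where
  "ell_curve R r \<phi> = (R * cos \<phi>, (R + r) * sin \<phi>)"

definition w1 :: "real \<Rightarrow> real \<Rightarrow> real \<Rightarrow> real" where
  "w1 \<phi> R r = sqrt (R\<^sup>2 * (1 - cos \<phi>)\<^sup>2 + (R + r)\<^sup>2 * (sin \<phi>)\<^sup>2)"
definition w2 :: "real \<Rightarrow> real \<Rightarrow> real \<Rightarrow> real" where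
  "w2 \<phi> R r = sqrt (R\<^sup>2 * (sin \<phi>)\<^sup>2 + (R + r)\<^sup>2 * (cos \<phi>)\<^sup>2)"
definition w3 :: "real \<Rightarrow> real \<Rightarrow> real \<Rightarrow> real" where
  "w3 \<phi> R r = sqrt (R\<^sup>2 * (cos \<phi>)\<^sup>2 + (R + r)\<^sup>2 * (1 - sin \<phi>)\<^sup>2)"

text \<open>The ellipse state: the uniform (arc-length) probability distribution on the ellipse;
  for R = r = 0 the ellipse degenerates to the origin and the state is the Dirac mass there.\<close>
definition ellipse_state :: "real \<Rightarrow> real \<Rightarrow> (real \<times> real) measure" where
  "ellipse_state R r =
     (let L = integral {0..2*pi} (\<lambda>\<phi>. w2 \<phi> R r) in
      if L = 0 then return borel (0, 0)
      else distr (density (restrict_space lborel {0..<2*pi}) (\<lambda>\<phi>. ennreal (w2 \<phi> R r / L)))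
                 borel (ell_curve R r))"

end

theory Submission imports Defs begin


lemma smooth_cont:
  assumes "smooth_on {0..} f" shows "continuous_on {0..} f"
proof -
  from assms obtain D where D0: "D 0 = f" and
    D: "\<forall>k. \<forall>x\<in>{0..}. (D k has_real_derivative D (Suc k) x) (at x within {0..})"
    unfolding smooth_on_def by blast
  have "\<And>x. x \<in> {0..} \<Longrightarrow> (f has_real_derivative D 1 x) (at x within {0..})"
    using D D0 by (metis One_nat_def)
  then show ?thesis by (rule DERIV_continuous_on)
qed

lemma Fforce_lip:
  assumes C1: "\<exists>F'. (\<forall>d. (Fforce fA fR chi has_derivative F' d) (at d))
                 \<and> (\<forall>v. continuous_on UNIV (\<lambda>d. F' d v))
                 \<and> (\<exists>B. \<forall>d v. norm (F' d v) \<le> B * norm v)"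
  shows "\<exists>B. \<forall>x y. norm (Fforce fA fR chi x - Fforce fA fR chi y) \<le> B * norm (x - y)"
proof -
  from C1 obtain F' B where d: "\<And>d. (Fforce fA fR chi has_derivative F' d) (at d)"
    and b: "\<And>d v. norm (F' d v) \<le> B * norm v" by blast
  have "norm (Fforce fA fR chi x - Fforce fA fR chi y) \<le> B * norm (x - y)" for x y
  proof (rule differentiable_bound[where S=UNIV and f' = F'])
    show "convex (UNIV :: (real \<times> real) set)" by simp
    show "(Fforce fA fR chi has_derivative F' z) (at z within UNIV)" for z using d by simp
    show "onorm (F' z) \<le> B" for z
      by (rule onorm_le) (rule b)
  qed auto
  then show ?thesis by blast
qed

lemma Fforce_0: "Fforce fA fR chi 0 = 0"
  by (simp add: Fforce_def Tmat_def zero_prod_def)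

lemma cos2_int: "integral {0..2*pi} (\<lambda>x. (cos x)\<^sup>2) = pi"
proof -
  have "((\<lambda>x. (cos x)\<^sup>2) has_integral ((2*pi/2 + sin(2*(2*pi))/4) - (0/2 + sin(2*0)/4))) {0..2*pi}"
  proof (rule fundamental_theorem_of_calculus)
    show "0 \<le> 2*pi" by simp
    show "((\<lambda>x. x/2 + sin(2*x)/4) has_vector_derivative (cos x)\<^sup>2) (at x within {0..2*pi})" for x
    proof -
      have "((\<lambda>x. x/2 + sin(2*x)/4) has_real_derivative (1/2 + cos(2*x)*2/4)) (at x within {0..2*pi})"
        by (auto intro!: derivative_eq_intros)
      moreover have "1/2 + cos(2*x)*2/4 = (cos x)\<^sup>2" by (simp only: cos_double_cos) (simp add: field_simps)
      ultimately show ?thesis by (simp add: has_real_derivative_iff_has_vector_derivative)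
    qed
  qed
  then show ?thesis by (simp add: integral_unique)
qed


lemma sym1:
  fixes G :: "real \<Rightarrow> real"
  assumes c: "continuous_on UNIV G" and s: "\<And>x. G (2*pi - x) = G x"
  shows "integral {0..2*pi} G = 2 * integral {0..pi} G"
proof -
  have i: "G integrable_on {a..b}" for a b
    by (rule integrable_continuous_interval) (rule continuous_on_subset[OF c], simp)
  have "integral {0..pi} G + integral {pi..2*pi} G = integral {0..2*pi} G"
    by (rule Henstock_Kurzweil_Integration.integral_combine) (simp_all add: i)
  moreover have "integral {pi..2*pi} G = integral {0..pi} G"
  proof -
    have "integral {-(2*pi)..-pi} (\<lambda>x. G (-x)) = integral {pi..2*pi} G"
      by (rule integral_unique) (simp add: integrable_integral i)
    moreover have "(\<lambda>x. G (-x)) = (\<lambda>x. G (x + 2*pi))"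
      using s[of "_ + 2*pi"] by simp
    moreover have "integral {0 - 2*pi..pi - 2*pi} (\<lambda>x. G (x + 2*pi)) = integral {0..pi} G"
      by (rule integral_shift_real_ivl)
    ultimately show ?thesis by simp
  qed
  ultimately show ?thesis by simp
qed

lemma sym2:
  fixes G :: "real \<Rightarrow> real"
  assumes c: "continuous_on UNIV G" and p: "\<And>x. G (x + 2*pi) = G x"
    and s: "\<And>x. G (pi - x) = G x"
  shows "integral {0..2*pi} G = 2 * integral {pi/2..3*pi/2} G"
proof -
  have i: "G integrable_on {a..b}" for a b
    by (rule integrable_continuous_interval) (rule continuous_on_subset[OF c], simp)
  have 1: "integral {0..3*pi/2} G + integral {3*pi/2..2*pi} G = integral {0..2*pi} G"
    by (rule Henstock_Kurzweil_Integration.integral_combine) (simp_all add: i)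
  have 2: "integral {0..pi/2} G + integral {pi/2..3*pi/2} G = integral {0..3*pi/2} G"
    by (rule Henstock_Kurzweil_Integration.integral_combine) (simp_all add: i)
  have 3: "integral {-pi/2..0} G + integral {0..pi/2} G = integral {-pi/2..pi/2} G"
    by (rule Henstock_Kurzweil_Integration.integral_combine) (simp_all add: i)
  have 4: "integral {3*pi/2..2*pi} G = integral {-pi/2..0} G"
  proof -
    have "integral {3*pi/2 - 2*pi..2*pi - 2*pi} (\<lambda>x. G (x + 2*pi)) = integral {3*pi/2..2*pi} G"
      by (rule integral_shift_real_ivl)
    moreover have "3*pi/2 - 2*pi = -pi/2" by simp
    ultimately show ?thesis using p by simp
  qed
  have 5: "integral {-pi/2..pi/2} G = integral {pi/2..3*pi/2} G"
  proof -
    have "integral {-(3*pi/2)..-(pi/2)} (\<lambda>x. G (-x)) = integral {pi/2..3*pi/2} G"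
      by (rule integral_unique) (simp add: integrable_integral i)
    moreover have "(\<lambda>x. G (-x)) = (\<lambda>x. G (x + pi))"
      using s[of "_ + pi"] by simp
    moreover have "integral {-pi/2 - pi..pi/2 - pi} (\<lambda>x. G (x + pi)) = integral {-pi/2..pi/2} G"
      by (rule integral_shift_real_ivl)
    moreover have "-pi/2 - pi = -(3*pi/2)" "pi/2 - pi = -(pi/2)" by simp_all
    ultimately show ?thesis by simp
  qed
  show ?thesis using 1 2 3 4 5 by simp
qed



lemma int_nu:
  fixes h :: "real \<Rightarrow> real \<times> real" and g :: "real \<Rightarrow> real"
  assumes h: "continuous_on UNIV h" and g: "continuous_on UNIV g" and g0: "\<And>x. g x \<ge> 0"
  shows "integral\<^sup>L (density (restrict_space lborel {0..<2*pi}) (\<lambda>\<phi>. ennreal (g \<phi>))) h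
       = integral {0..2*pi} (\<lambda>\<phi>. g \<phi> *\<^sub>R h \<phi>)"
proof -
  let ?M = "restrict_space lborel {0..<2*pi}"
  have gb: "g \<in> borel_measurable borel" and hb: "h \<in> borel_measurable borel"
    using g h by (simp_all add: borel_measurable_continuous_onI)
  have gM: "g \<in> borel_measurable ?M" and hM: "h \<in> borel_measurable ?M"
    using gb hb by (simp_all add: measurable_restrict_space1)
  have cgh: "continuous_on {0..2*pi} (\<lambda>\<phi>. g \<phi> *\<^sub>R h \<phi>)"
    using g h by (intro continuous_intros; auto intro: continuous_on_subset)
  have si: "set_integrable lborel {0..2*pi} (\<lambda>\<phi>. g \<phi> *\<^sub>R h \<phi>)"
    unfolding set_integrable_def by (rule borel_integrable_compact[OF _ cgh]) simp
  have si2: "set_integrable lborel {0..<2*pi} (\<lambda>\<phi>. g \<phi> *\<^sub>R h \<phi>)"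
    by (rule set_integrable_subset[OF si]) auto
  have "integral\<^sup>L (density ?M (\<lambda>\<phi>. ennreal (g \<phi>))) h = integral\<^sup>L ?M (\<lambda>x. g x *\<^sub>R h x)"
    by (rule integral_density[OF hM gM]) (simp add: g0)
  also have "\<dots> = integral\<^sup>L lborel (\<lambda>x. indicator {0..<2*pi} x *\<^sub>R (g x *\<^sub>R h x))"
    by (rule integral_restrict_space) simp
  also have "\<dots> = (LINT x:{0..<2*pi}|lborel. g x *\<^sub>R h x)"
    by (simp add: set_lebesgue_integral_def)
  also have "\<dots> = (LINT x:{0..2*pi}|lborel. g x *\<^sub>R h x)"
  proof (rule set_integral_cong_set)
    show "set_borel_measurable lborel {0..2*pi} (\<lambda>x. g x *\<^sub>R h x)"
      using si unfolding set_integrable_def set_borel_measurable_def by (rule borel_measurable_integrable)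
    show "set_borel_measurable lborel {0..<2*pi} (\<lambda>x. g x *\<^sub>R h x)"
      using si2 unfolding set_integrable_def set_borel_measurable_def by (rule borel_measurable_integrable)
    show "AE x in lborel. (x \<in> {0..2*pi}) = (x \<in> {0..<2*pi})"
      using AE_lborel_singleton[of "2*pi"] by eventually_elim auto
  qed
  also have "\<dots> = integral {0..2*pi} (\<lambda>\<phi>. g \<phi> *\<^sub>R h \<phi>)"
    by (rule set_borel_integral_eq_integral(2)[OF si])
  finally show ?thesis .
qed

lemma nn_pos:
  fixes u :: "real \<Rightarrow> ennreal"
  assumes u: "u \<in> borel_measurable borel" and ab: "a < b" and pos: "\<And>x. a < x \<Longrightarrow> x < b \<Longrightarrow> u x > 0"
  shows "(\<integral>\<^sup>+x. u x \<partial>lborel) > 0"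
proof (rule ccontr)
  assume "\<not> ?thesis"
  then have "(\<integral>\<^sup>+x. u x \<partial>lborel) = 0" by (simp add: zero_less_iff_neq_zero)
  then have "AE x in lborel. u x = 0" using u by (subst (asm) nn_integral_0_iff_AE) auto
  then have "AE x in lborel. x \<notin> {a<..<b}" by eventually_elim (use pos in fastforce)
  then have "emeasure lborel {a<..<b} = 0"
    by (subst (asm) AE_iff_measurable[where N="{a<..<b}"]) auto
  then show False using ab by simp
qed

lemma cont_comp0:
  assumes "continuous_on {0..} f" "continuous_on UNIV h" "\<And>x. h x \<ge> 0"
  shows "continuous_on UNIV (\<lambda>x. f (h x))"
  by (rule continuous_on_compose2[OF assms(1) assms(2)]) (auto simp: assms(3))

theorem corollary3p7:
  fixes fA fR :: "real \<Rightarrow> real" and chi da de R r :: real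
  assumes chi: "0 \<le> chi" "chi \<le> 1"
    and smoothA: "smooth_on {0..} fA" and smoothR: "smooth_on {0..} fR"
    and intA: "set_integrable lborel {0..} fA" and intR: "set_integrable lborel {0..} fR"
    and signR: "\<forall>\<rho>\<ge>0. fR \<rho> \<ge> 0" and signA: "\<forall>\<rho>\<ge>0. fA \<rho> \<le> 0"
    and da: "da > 0"
    and da_neg: "\<forall>\<rho>>da. fA \<rho> + fR \<rho> \<le> 0"
    and da_pos: "\<forall>\<rho>. 0 \<le> \<rho> \<and> \<rho> < da \<longrightarrow> fA \<rho> + fR \<rho> > 0"
    and C1: "\<exists>F'. (\<forall>d. (Fforce fA fR chi has_derivative F' d) (at d))
                 \<and> (\<forall>v. continuous_on UNIV (\<lambda>d. F' d v))
                 \<and> (\<exists>B. \<forall>d v. norm (F' d v) \<le> B * norm v)"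
    and de: "de > da"
    and decr: "\<forall>c\<in>{0..1}. strict_antimono_on {0..de} (\<lambda>\<rho>. c * fA \<rho> + fR \<rho>)"
    and Rr: "R \<ge> 0" "r \<ge> 0"
    and eq: "equilibrium_state fA fR chi (ellipse_state R r)"
  shows "integral {0..pi} (\<lambda>\<phi>. (fA (w1 \<phi> R r) + fR (w1 \<phi> R r)) * R * (1 - cos \<phi>) * w2 \<phi> R r) = 0
       \<and> integral {pi/2..3*pi/2}
           (\<lambda>\<phi>. (\<lambda>\<rho>. chi * fA \<rho> + fR \<rho>) (w3 \<phi> R r) * (R + r) * (1 - sin \<phi>) * w2 \<phi> R r) = 0"
proof -
  define c where "c = ell_curve R r"
  define L where "L = integral {0..2*pi} (\<lambda>\<phi>. w2 \<phi> R r)"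
  define g where "g = (\<lambda>\<phi>. w2 \<phi> R r / L)"
  define \<nu> where "\<nu> = density (restrict_space lborel {0..<2*pi}) (\<lambda>\<phi>. ennreal (g \<phi>))"
  define K where "K = Kfield fA fR chi (ellipse_state R r)"
  define F where "F = Fforce fA fR chi"
  have contA: "continuous_on {0..} fA" by (rule smooth_cont[OF smoothA])
  have contR: "continuous_on {0..} fR" by (rule smooth_cont[OF smoothR])
  have w1c: "continuous_on UNIV (\<lambda>\<phi>. w1 \<phi> R r)" unfolding w1_def by (intro continuous_intros)
  have w2c: "continuous_on UNIV (\<lambda>\<phi>. w2 \<phi> R r)" unfolding w2_def by (intro continuous_intros)
  have w3c: "continuous_on UNIV (\<lambda>\<phi>. w3 \<phi> R r)" unfolding w3_def by (intro continuous_intros)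
  have w1p: "w1 \<phi> R r \<ge> 0" for \<phi> unfolding w1_def by simp
  have w2p: "w2 \<phi> R r \<ge> 0" for \<phi> unfolding w2_def by simp
  have w3p: "w3 \<phi> R r \<ge> 0" for \<phi> unfolding w3_def by simp
  show ?thesis
  proof (cases "R + r = 0")
    case True
    then have "R = 0" "R + r = 0" using Rr by auto
    then show ?thesis by simp
  next
    case False
    then have Rr0: "R + r > 0" using Rr by auto
    have w2lb: "(R + r) * (cos \<phi>)\<^sup>2 \<le> w2 \<phi> R r" for \<phi>
    proof -
      have a: "(cos \<phi>)\<^sup>2 \<le> \<bar>cos \<phi>\<bar>"
        by (metis abs_cos_le_one abs_ge_self abs_ge_zero one_le_numeral
    order.trans power_abs power_decreasing power_one_right)
      have "(R + r) * (cos \<phi>)\<^sup>2 \<le> (R + r) * \<bar>cos \<phi>\<bar>"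
        using a Rr0 by (simp add: mult_left_mono)
      also have "\<dots> = sqrt ((R + r)\<^sup>2 * (cos \<phi>)\<^sup>2)"
        using Rr0 by (simp add: real_sqrt_mult)
      also have "\<dots> \<le> w2 \<phi> R r"
        unfolding w2_def by (rule real_sqrt_le_mono) simp
      finally show ?thesis .
    qed
    have Lpos: "L > 0"
    proof -
      have "integral {0..2*pi} (\<lambda>\<phi>. (R + r) * (cos \<phi>)\<^sup>2) \<le> L"
        unfolding L_def
        by (rule integral_le) (auto intro!: integrable_continuous_interval continuous_intros w2lb
            intro: continuous_on_subset[OF w2c])
      moreover have "integral {0..2*pi} (\<lambda>\<phi>. (R + r) * (cos \<phi>)\<^sup>2) = (R + r) * pi"
        by (simp add: cos2_int)
      ultimately show ?thesis using Rr0 by (smt (verit) mult_pos_pos pi_gt_zero)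
    qed
    have gc: "continuous_on UNIV g" unfolding g_def using Lpos by (intro continuous_intros w2c) auto
    have gp: "g \<phi> \<ge> 0" for \<phi> unfolding g_def using w2p Lpos by simp
    have gint: "integral {0..2*pi} g = 1"
    proof -
      have "g = (\<lambda>\<phi>. (1/L) * w2 \<phi> R r)" unfolding g_def by auto
      then have "integral {0..2*pi} g = (1/L) * L" unfolding L_def
        by (simp only: Henstock_Kurzweil_Integration.integral_mult_right)
      then show ?thesis using Lpos by simp
    qed
    have es: "ellipse_state R r = distr \<nu> borel c"
      unfolding ellipse_state_def Let_def using Lpos
      by (simp add: L_def[symmetric] \<nu>_def g_def c_def)
    have cc: "continuous_on UNIV c" unfolding c_def ell_curve_def by (intro continuous_intros)
    have cmeas: "c \<in> measurable \<nu> borel"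
      unfolding \<nu>_def measurable_density_eq1
      by (rule measurable_restrict_space1) (simp add: borel_measurable_continuous_onI[OF cc])
    have Fc: "continuous_on UNIV F"
    proof -
      from C1 obtain F' where d: "\<And>d. (F has_derivative F' d) (at d)" unfolding F_def by blast
      show ?thesis by (rule has_derivative_continuous_on) (use d in simp)
    qed
    obtain B where B: "\<And>x y. norm (F x - F y) \<le> B * norm (x - y)"
      using Fforce_lip[OF C1] unfolding F_def by blast
    have hc: "continuous_on UNIV (\<lambda>\<phi>. F (x - c \<phi>))" for x
      by (rule continuous_on_compose2[OF Fc]) (auto intro!: continuous_intros cc)
    have hint: "(\<lambda>\<phi>. g \<phi> *\<^sub>R F (x - c \<phi>)) integrable_on {0..2*pi}" for x
      by (rule integrable_continuous_interval) (auto intro!: continuous_intros hc gc intro: continuous_on_subset)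
    have Kint: "K x = integral {0..2*pi} (\<lambda>\<phi>. g \<phi> *\<^sub>R F (x - c \<phi>))" for x
    proof -
      have "K x = integral\<^sup>L (distr \<nu> borel c) (\<lambda>y. F (x - y))"
        unfolding K_def Kfield_def es F_def ..
      also have "\<dots> = integral\<^sup>L \<nu> (\<lambda>\<phi>. F (x - c \<phi>))"
      proof (rule integral_distr[OF cmeas])
        show "(\<lambda>y. F (x - y)) \<in> borel_measurable borel"
          by (rule borel_measurable_continuous_onI, rule continuous_on_compose2[OF Fc])
             (auto intro!: continuous_intros)
      qed
      also have "\<dots> = integral {0..2*pi} (\<lambda>\<phi>. g \<phi> *\<^sub>R F (x - c \<phi>))"
        unfolding \<nu>_def by (rule int_nu[OF hc gc gp])
      finally show ?thesis .
    qed
    have Klip: "norm (K x - K y) \<le> B * norm (x - y)" for x y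
    proof -
      have "K x - K y = integral {0..2*pi} (\<lambda>\<phi>. g \<phi> *\<^sub>R F (x - c \<phi>) - g \<phi> *\<^sub>R F (y - c \<phi>))"
        unfolding Kint by (rule integral_diff[symmetric]) (rule hint)+
      also have "norm \<dots> \<le> integral {0..2*pi} (\<lambda>\<phi>. g \<phi> * (B * norm (x - y)))"
      proof (rule integral_norm_bound_integral)
        show "(\<lambda>\<phi>. g \<phi> *\<^sub>R F (x - c \<phi>) - g \<phi> *\<^sub>R F (y - c \<phi>)) integrable_on {0..2*pi}"
          by (intro integrable_diff hint)
        show "(\<lambda>\<phi>. g \<phi> * (B * norm (x - y))) integrable_on {0..2*pi}"
          by (rule integrable_continuous_interval) (auto intro!: continuous_intros gc intro: continuous_on_subset)
        fix \<phi>
        have "norm (g \<phi> *\<^sub>R F (x - c \<phi>) - g \<phi> *\<^sub>R F (y - c \<phi>)) = g \<phi> * norm (F (x - c \<phi>) - F (y - c \<phi>))"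
          using gp[of \<phi>] by (simp add: scaleR_diff_right[symmetric])
        also have "\<dots> \<le> g \<phi> * (B * norm (x - y))"
          using B[of "x - c \<phi>" "y - c \<phi>"] gp[of \<phi>] by (intro mult_left_mono) simp_all
        finally show "norm (g \<phi> *\<^sub>R F (x - c \<phi>) - g \<phi> *\<^sub>R F (y - c \<phi>)) \<le> g \<phi> * (B * norm (x - y))" .
      qed
      also have "\<dots> = B * norm (x - y)"
        using gint by (simp add: Henstock_Kurzweil_Integration.integral_mult_left)
      finally show ?thesis .
    qed

    define S where "S = msupport (ellipse_state R r)"
    have space\<nu>: "space \<nu> = {0..<2*pi}" by (simp add: \<nu>_def)
    have sets\<nu>: "{a<..<b} \<in> sets \<nu>" if "{a<..<b} \<subseteq> {0..<2*pi}" for a b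
      using that by (simp add: \<nu>_def sets_restrict_space_iff)
    have gB[measurable]: "g \<in> borel_measurable borel"
      using gc by (rule borel_measurable_continuous_onI)
    have pos: "emeasure \<nu> {a<..<b} > 0"
      if ab: "a < b" "{a<..<b} \<subseteq> {0..<2*pi}" "\<forall>\<psi>\<in>{a<..<b}. cos \<psi> \<noteq> 0" for a b
    proof -
      have "emeasure \<nu> {a<..<b} = (\<integral>\<^sup>+\<phi>. ennreal (g \<phi>) * indicator {a<..<b} \<phi> \<partial>restrict_space lborel {0..<2*pi})"
        unfolding \<nu>_def
        by (rule emeasure_density) (auto intro: measurable_restrict_space1 simp: sets_restrict_space_iff ab)
      also have "\<dots> = (\<integral>\<^sup>+\<phi>. ennreal (g \<phi>) * indicator {a<..<b} \<phi> * indicator {0..<2*pi} \<phi> \<partial>lborel)"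
        by (rule nn_integral_restrict_space) simp
      also have "\<dots> > 0"
      proof (rule nn_pos[OF _ ab(1)])
        show "(\<lambda>\<phi>. ennreal (g \<phi>) * indicator {a<..<b} \<phi> * indicator {0..<2*pi} \<phi>) \<in> borel_measurable borel"
          by measurable
        fix x assume x: "a < x" "x < b"
        then have xin: "x \<in> {0..<2*pi}" and cx: "cos x \<noteq> 0" using ab by auto
        have "(R + r) * (cos x)\<^sup>2 > 0" using cx Rr0 by simp
        then have "w2 x R r > 0" using w2lb[of x] by linarith
        then have "g x > 0" using Lpos by (simp add: g_def)
        then show "0 < ennreal (g x) * indicator {a<..<b} x * indicator {0..<2*pi} x"
          using x xin by (simp add: indicator_def)
      qed
      finally show ?thesis .
    qed
    have mball: "emeasure \<nu> {a<..<b} \<le> emeasure (ellipse_state R r) (ball x e)"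
      if "{a<..<b} \<subseteq> {0..<2*pi}" "\<forall>\<phi>\<in>{a<..<b}. dist x (c \<phi>) < e" for a b x e
    proof -
      have sub: "{a<..<b} \<subseteq> c -` ball x e \<inter> space \<nu>" using that by (auto simp: space\<nu>)
      have meas: "c -` ball x e \<inter> space \<nu> \<in> sets \<nu>" by (rule measurable_sets[OF cmeas]) simp
      have "emeasure (ellipse_state R r) (ball x e) = emeasure \<nu> (c -` ball x e \<inter> space \<nu>)"
        unfolding es by (rule emeasure_distr[OF cmeas]) simp
      then show ?thesis using emeasure_mono[OF sub meas] by simp
    qed
    have csupp: "c \<psi> \<in> S"
      if ab: "a < b" "{a<..<b} \<subseteq> {0..<2*pi}" "\<forall>\<phi>\<in>{a<..<b}. cos \<phi> \<noteq> 0" and psi: "a < \<psi>" "\<psi> < b" for a b \<psi>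
      unfolding S_def msupport_def
    proof (intro CollectI allI impI)
      fix e :: real assume e: "e > 0"
      obtain \<delta> where d: "\<delta> > 0" "\<And>\<phi>. dist \<phi> \<psi> < \<delta> \<Longrightarrow> dist (c \<phi>) (c \<psi>) < e"
        using cc e unfolding continuous_on_iff by fastforce
      define b' where "b' = min b (\<psi> + \<delta>)"
      have 1: "\<psi> < b'" using psi d by (simp add: b'_def)
      have 2: "{\<psi><..<b'} \<subseteq> {0..<2*pi}" using ab psi by (auto simp: b'_def)
      have 3: "\<forall>\<phi>\<in>{\<psi><..<b'}. cos \<phi> \<noteq> 0" using ab psi by (auto simp: b'_def)
      have 4: "\<forall>\<phi>\<in>{\<psi><..<b'}. dist (c \<psi>) (c \<phi>) < e"
      proof
        fix \<phi> assume "\<phi> \<in> {\<psi><..<b'}"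
        then have "dist \<phi> \<psi> < \<delta>" by (auto simp: b'_def dist_real_def)
        then show "dist (c \<psi>) (c \<phi>) < e" using d(2) by (simp add: dist_commute)
      qed
      show "emeasure (ellipse_state R r) (ball (c \<psi>) e) > 0"
        using pos[OF 1 2 3] mball[OF 2 4] by (simp add: less_le_trans)
    qed
    have AEs: "AE \<phi> in \<nu>. c \<phi> \<in> S \<longrightarrow> K (c \<phi>) = 0"
    proof -
      have "AE x in ellipse_state R r. x \<in> S \<longrightarrow> K x = 0"
        using eq unfolding equilibrium_state_def K_def S_def by blast
      then have "AE x in distr \<nu> borel c. x \<in> S \<longrightarrow> K x = 0" by (simp only: es)
      then show ?thesis by (rule AE_distrD[OF cmeas])
    qed
    have Kzero: "K (c \<phi>0) = 0"
      if d0: "0 < \<delta>0" "{\<phi>0<..<\<phi>0+\<delta>0} \<subseteq> {0..<2*pi}" "\<forall>\<phi>\<in>{\<phi>0<..<\<phi>0+\<delta>0}. cos \<phi> \<noteq> 0" for \<phi>0 \<delta>0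
    proof (rule ccontr)
      assume ne: "K (c \<phi>0) \<noteq> 0"
      define e where "e = norm (K (c \<phi>0)) / (\<bar>B\<bar> + 1)"
      have e0: "e > 0" using ne by (simp add: e_def add_pos_nonneg)
      have Kne: "K x \<noteq> 0" if "dist x (c \<phi>0) < e" for x
      proof
        assume "K x = 0"
        then have "norm (K (c \<phi>0)) \<le> B * norm (x - c \<phi>0)" using Klip[of x "c \<phi>0"] by simp
        also have "\<dots> \<le> \<bar>B\<bar> * norm (x - c \<phi>0)" by (simp add: mult_right_mono)
        also have "\<dots> \<le> \<bar>B\<bar> * e" by (rule mult_left_mono) (use that in \<open>simp_all add: dist_norm\<close>)
        also have "\<dots> < norm (K (c \<phi>0))"
        proof -
          have pB: "\<bar>B\<bar> + 1 > 0" using abs_ge_zero[of B] by linarith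
          have "(\<bar>B\<bar> + 1) * e = norm (K (c \<phi>0))" unfolding e_def using pB by simp
          then have "\<bar>B\<bar> * e + e = norm (K (c \<phi>0))" by (simp add: distrib_right)
          then show ?thesis using e0 by linarith
        qed
        finally show False by simp
      qed
      obtain \<delta> where d: "\<delta> > 0" "\<And>\<phi>. dist \<phi> \<phi>0 < \<delta> \<Longrightarrow> dist (c \<phi>) (c \<phi>0) < e"
        using cc e0 unfolding continuous_on_iff by fastforce
      define b where "b = \<phi>0 + min \<delta> \<delta>0"
      have sub: "{\<phi>0<..<b} \<subseteq> {\<phi>0<..<\<phi>0+\<delta>0}" by (auto simp: b_def)
      have I: "\<phi>0 < b" "{\<phi>0<..<b} \<subseteq> {0..<2*pi}" "\<forall>\<phi>\<in>{\<phi>0<..<b}. cos \<phi> \<noteq> 0"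
        using d0 d(1) sub by (auto simp: b_def)
      have "AE \<phi> in \<nu>. \<phi> \<notin> {\<phi>0<..<b}"
        using AEs
      proof eventually_elim
        fix \<phi> assume h: "c \<phi> \<in> S \<longrightarrow> K (c \<phi>) = 0"
        show "\<phi> \<notin> {\<phi>0<..<b}"
        proof
          assume \<phi>: "\<phi> \<in> {\<phi>0<..<b}"
          then have "c \<phi> \<in> S" using csupp[OF I] by auto
          moreover have "dist \<phi> \<phi>0 < \<delta>" using \<phi> by (auto simp: b_def dist_real_def)
          then have "K (c \<phi>) \<noteq> 0" using Kne d(2) by blast
          ultimately show False using h by simp
        qed
      qed
      then have "emeasure \<nu> {\<phi>0<..<b} = 0"
        using I by (subst (asm) AE_iff_measurable[where N="{\<phi>0<..<b}"]) (auto simp: space\<nu> intro: sets\<nu>)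
      then show False using pos[OF I] by simp
    qed
    have K1: "K (c 0) = 0"
    proof (rule Kzero[of "pi/4"])
      show "0 < pi/4" by simp
      show "{0<..<0 + pi/4} \<subseteq> {0..<2*pi}" using pi_gt_zero by auto
      show "\<forall>\<phi>\<in>{0<..<0 + pi/4}. cos \<phi> \<noteq> 0"
      proof
        fix \<phi> :: real assume "\<phi> \<in> {0<..<0 + pi/4}"
        then have "0 < cos \<phi>" using pi_gt_zero by (intro cos_gt_zero_pi) auto
        then show "cos \<phi> \<noteq> 0" by simp
      qed
    qed
    have K2: "K (c (pi/2)) = 0"
    proof (rule Kzero[of "pi/4"])
      show "0 < pi/4" by simp
      show "{pi/2<..<pi/2 + pi/4} \<subseteq> {0..<2*pi}" using pi_gt_zero by auto
      show "\<forall>\<phi>\<in>{pi/2<..<pi/2 + pi/4}. cos \<phi> \<noteq> 0"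
      proof
        fix \<phi> :: real assume "\<phi> \<in> {pi/2<..<pi/2 + pi/4}"
        then have "0 < cos (pi - \<phi>)" using pi_gt_zero by (intro cos_gt_zero_pi) auto
        then show "cos \<phi> \<noteq> 0" by (simp add: cos_pi_minus)
      qed
    qed

    have n1: "norm (c 0 - c \<phi>) = w1 \<phi> R r" for \<phi>
    proof -
      have "(R - R * cos \<phi>)\<^sup>2 = R\<^sup>2 * (1 - cos \<phi>)\<^sup>2" by (simp add: power2_eq_square algebra_simps)
      then show ?thesis by (simp add: c_def ell_curve_def w1_def norm_Pair power_mult_distrib)
    qed
    have n2: "norm (c (pi/2) - c \<phi>) = w3 \<phi> R r" for \<phi>
    proof -
      have "((R + r) - (R + r) * sin \<phi>)\<^sup>2 = (R + r)\<^sup>2 * (1 - sin \<phi>)\<^sup>2" by (simp add: power2_eq_square algebra_simps)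
      then show ?thesis by (simp add: c_def ell_curve_def w3_def norm_Pair power_mult_distrib)
    qed
    have f1: "fst (F (c 0 - c \<phi>)) = (fA (w1 \<phi> R r) + fR (w1 \<phi> R r)) * (R * (1 - cos \<phi>))" for \<phi>
    proof -
      have "fst (F (c 0 - c \<phi>)) = (fA (w1 \<phi> R r) + fR (w1 \<phi> R r)) * fst (c 0 - c \<phi>)"
        by (simp add: F_def Fforce_def Tmat_def n1 algebra_simps)
      moreover have "fst (c 0 - c \<phi>) = R * (1 - cos \<phi>)" by (simp add: c_def ell_curve_def algebra_simps)
      ultimately show ?thesis by simp
    qed
    have f2: "snd (F (c (pi/2) - c \<phi>)) = (chi * fA (w3 \<phi> R r) + fR (w3 \<phi> R r)) * ((R + r) * (1 - sin \<phi>))" for \<phi>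
    proof -
      have "snd (F (c (pi/2) - c \<phi>)) = (chi * fA (w3 \<phi> R r) + fR (w3 \<phi> R r)) * snd (c (pi/2) - c \<phi>)"
        by (simp add: F_def Fforce_def Tmat_def n2 algebra_simps)
      moreover have "snd (c (pi/2) - c \<phi>) = (R + r) * (1 - sin \<phi>)" by (simp add: c_def ell_curve_def algebra_simps)
      ultimately show ?thesis by simp
    qed
    define G1 where "G1 = (\<lambda>\<phi>. (fA (w1 \<phi> R r) + fR (w1 \<phi> R r)) * R * (1 - cos \<phi>) * w2 \<phi> R r)"
    define G2 where "G2 = (\<lambda>\<phi>. (chi * fA (w3 \<phi> R r) + fR (w3 \<phi> R r)) * (R + r) * (1 - sin \<phi>) * w2 \<phi> R r)"
    have cA1: "continuous_on UNIV (\<lambda>\<phi>. fA (w1 \<phi> R r))" by (rule cont_comp0[OF contA w1c w1p])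
    have cR1: "continuous_on UNIV (\<lambda>\<phi>. fR (w1 \<phi> R r))" by (rule cont_comp0[OF contR w1c w1p])
    have cA3: "continuous_on UNIV (\<lambda>\<phi>. fA (w3 \<phi> R r))" by (rule cont_comp0[OF contA w3c w3p])
    have cR3: "continuous_on UNIV (\<lambda>\<phi>. fR (w3 \<phi> R r))" by (rule cont_comp0[OF contR w3c w3p])
    have G1c: "continuous_on UNIV G1" unfolding G1_def by (intro continuous_intros cA1 cR1 w2c)
    have G2c: "continuous_on UNIV G2" unfolding G2_def by (intro continuous_intros cA3 cR3 w2c)
    have G1s: "G1 (2*pi - x) = G1 x" for x by (simp add: G1_def w1_def w2_def)
    have G2p: "G2 (x + 2*pi) = G2 x" for x by (simp add: G2_def w3_def w2_def)
    have G2s: "G2 (pi - x) = G2 x" for x by (simp add: G2_def w3_def w2_def)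
    have I1: "integral {0..2*pi} G1 = 0"
    proof -
      have "0 = fst (K (c 0))" using K1 by simp
      also have "\<dots> = integral {0..2*pi} (fst \<circ> (\<lambda>\<phi>. g \<phi> *\<^sub>R F (c 0 - c \<phi>)))"
        unfolding Kint by (rule integral_linear[OF hint bounded_linear_fst, symmetric])
      also have "\<dots> = integral {0..2*pi} (\<lambda>\<phi>. (1/L) * G1 \<phi>)"
        by (rule integral_cong) (simp add: f1 g_def G1_def)
      also have "\<dots> = (1/L) * integral {0..2*pi} G1"
        by (rule Henstock_Kurzweil_Integration.integral_mult_right)
      finally show ?thesis using Lpos by simp
    qed
    have I2: "integral {0..2*pi} G2 = 0"
    proof -
      have "0 = snd (K (c (pi/2)))" using K2 by simp
      also have "\<dots> = integral {0..2*pi} (snd \<circ> (\<lambda>\<phi>. g \<phi> *\<^sub>R F (c (pi/2) - c \<phi>)))"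
        unfolding Kint by (rule integral_linear[OF hint bounded_linear_snd, symmetric])
      also have "\<dots> = integral {0..2*pi} (\<lambda>\<phi>. (1/L) * G2 \<phi>)"
        by (rule integral_cong) (simp add: f2 g_def G2_def)
      also have "\<dots> = (1/L) * integral {0..2*pi} G2"
        by (rule Henstock_Kurzweil_Integration.integral_mult_right)
      finally show ?thesis using Lpos by simp
    qed
    have "integral {0..pi} G1 = 0" using sym1[OF G1c G1s] I1 by simp
    moreover have "integral {pi/2..3*pi/2} G2 = 0" using sym2[OF G2c G2p G2s] I2 by simp
    ultimately show ?thesis unfolding G1_def G2_def by simp
  qed
qed

end
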